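(* Let $x$ be sufficiently large, let $N$ be any integer, and let $y=\lfloor 0.08x\rfloor$. Then there is a residue class $b \bmod P(x)$ such that $$(S_x-b)\cap[-y,y]=\varnothing\quad\text{and}\quad (S_x-N+b)\cap[-y,y]=\varnothing .$$
   Context: $p$ always denotes a prime. For $x\ge 2$, $S_x=\{n\in\mathbb Z:\ n\not\equiv 0 \pmod p \text{ for every prime } p\le x\}$, and $P(x)=\prod_{p\le x}p$. For a set $S\subset\mathbb Z$ and an integer $t$, $S-t=\{s-t:s\in S\}$; since $S_x$ is $P(x)$-periodic, $S_x-b$ depends only on $b\bmod P(x)$. *)

theory Defs
  imports "HOL-Computational_Algebra.Primes" Complex_Main
begin

definition sieved :: "real \<Rightarrow> int set" where
  "sieved x = {n. \<forall>p::nat. prime p \<and> real p \<le> x \<longrightarrow> \<not> (int p dvd n)}"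

definition shift :: "int set \<Rightarrow> int \<Rightarrow> int set" where
  "shift S t = (\<lambda>s. s - t) ` S"

end

theory Submission
  imports Defs "HOL-Number_Theory.Number_Theory" "HOL-Analysis.Analysis" "HOL-Real_Asymp.Real_Asymp"
begin


definition psi :: "nat \<Rightarrow> real" where "psi n = (\<Sum>d\<in>{1..n}. mangoldt d)"

lemma ln_fact_mangoldt:
  "ln (fact m :: real) = (\<Sum>d\<in>{1..m}. mangoldt d * real (m div d))"
proof (induction m)
  case 0
  then show ?case by simp
next
  case (Suc m)
  have "ln (fact (Suc m) :: real) = ln (real (Suc m)) + ln (fact m)"
    by (simp add: ln_mult fact_Suc)
  also have "ln (real (Suc m)) = (\<Sum>d | d dvd Suc m. mangoldt d)"
    using mangoldt_sum[of "Suc m", where 'a=real] by simp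
  also have "{d. d dvd Suc m} = {d\<in>{1..Suc m}. d dvd Suc m}"
    by (auto simp: dvd_imp_le Suc_le_eq intro: Nat.gr0I)
  also have "(\<Sum>d\<in>{d\<in>{1..Suc m}. d dvd Suc m}. mangoldt d :: real)
      = (\<Sum>d\<in>{1..Suc m}. if d dvd Suc m then mangoldt d else 0)"
    by (rule sum.inter_filter) simp
  also have "ln (fact m) = (\<Sum>d\<in>{1..Suc m}. mangoldt d * real (m div d))"
    using Suc by (simp add: sum.cl_ivl_Suc)
  also have "(\<Sum>d\<in>{1..Suc m}. if d dvd Suc m then mangoldt d else 0) +
             (\<Sum>d\<in>{1..Suc m}. mangoldt d * real (m div d))
           = (\<Sum>d\<in>{1..Suc m}. mangoldt d * real (Suc m div d))"
    unfolding sum.distrib[symmetric]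
    by (intro sum.cong refl) (auto simp: div_Suc algebra_simps dvd_eq_mod_eq_0)
  finally show ?case .
qed

lemma div_double_le: "(2*n) div d \<le> 2 * (n div d) + (1::nat)"
proof (cases "d = 0")
  case False
  have h: "d * (n div d) + n mod d = n" by simp
  have "2*n = d * (2*(n div d)) + 2*(n mod d)" by (metis h add_mult_distrib2 mult.left_commute)
  moreover have "2*(n mod d) < 2 * d" using False by simp
  ultimately have "2*n < d * (2*(n div d) + 2)" by (simp add: algebra_simps)
  then have "(2*n) div d < 2*(n div d) + 2" using False
    by (simp add: div_less_iff_less_mult mult.commute)
  then show ?thesis by simp
qed simp

lemma ln_binom_le_psi:
  "ln (real ((2*n) choose n)) \<le> psi (2*n)"
proof -
  have f: "fact (2*n) = fact n * fact n * ((2*n) choose n)"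
    using binomial_fact_lemma[of n "2*n"] by simp
  have pos: "(0::real) < fact n" by simp
  have "ln (real ((2*n) choose n)) = ln (fact (2*n)) - 2 * ln (fact n :: real)"
  proof -
    have "(fact (2*n) :: real) = fact n * fact n * real ((2*n) choose n)"
      using f by (metis of_nat_fact of_nat_mult)
    moreover have "real ((2*n) choose n) > 0" by simp
    ultimately show ?thesis by (simp add: ln_mult)
  qed
  also have "2 * ln (fact n :: real) = (\<Sum>d\<in>{1..2*n}. mangoldt d * (2 * real (n div d)))"
  proof -
    have "(\<Sum>d\<in>{1..2*n}. mangoldt d * (2 * real (n div d))) =
          (\<Sum>d\<in>{1..n}. mangoldt d * (2 * real (n div d)))"
      by (rule sum.mono_neutral_right) auto
    then show ?thesis by (simp add: ln_fact_mangoldt sum_distrib_left mult_ac)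
  qed
  also have "ln (fact (2*n) :: real) - (\<Sum>d\<in>{1..2*n}. mangoldt d * (2 * real (n div d)))
     = (\<Sum>d\<in>{1..2*n}. mangoldt d * (real ((2*n) div d) - 2 * real (n div d)))"
    by (simp add: ln_fact_mangoldt sum_subtractf algebra_simps)
  also have "\<dots> \<le> (\<Sum>d\<in>{1..2*n}. mangoldt d)"
  proof (rule sum_mono)
    fix d
    have "real ((2*n) div d) \<le> 2 * real (n div d) + 1"
      using div_double_le[of n d] by linarith
    then show "mangoldt d * (real ((2*n) div d) - 2 * real (n div d)) \<le> mangoldt d"
      using mangoldt_nonneg[of d] by (simp add: mult_left_le)
  qed
  finally show ?thesis by (simp add: psi_def)
qed



lemma mangoldt_real: "(mangoldt d :: real) = (if primepow d then ln (real (aprimedivisor d)) else 0)"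
  unfolding mangoldt_def of_real_eq_id id_def by simp

lemma card_exp_bound:
  fixes p X :: nat
  assumes "prime p" "1 \<le> X"
  shows "real (card {k. 0 < k \<and> p^k \<le> X}) * ln (real p) \<le> ln (real X)"
proof -
  let ?S = "{k. 0 < k \<and> p^k \<le> X}"
  have p2: "p \<ge> 2" using assms prime_ge_2_nat by blast
  have sub: "?S \<subseteq> {..X}"
  proof
    fix k assume "k \<in> ?S"
    then have "k < p^k" "p^k \<le> X" using p2 by (auto intro: less_le_trans[OF less_exp] power_increasing)
    then show "k \<in> {..X}" by simp
  qed
  have fin: "finite ?S" using sub finite_subset by blast
  have "p ^ card ?S \<le> X"
  proof (cases "?S = {}")
    case True
    then have "card ?S = 0" by (metis card.empty)
    then show ?thesis using assms by simp
  next
    case False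
    have "?S \<subseteq> {1..Max ?S}" using fin by (auto intro: Max_ge)
    then have "card ?S \<le> Max ?S" using card_mono[of "{1..Max ?S}" ?S] by simp
    moreover have "Max ?S \<in> ?S" using fin False by (rule Max_in)
    ultimately have "p ^ card ?S \<le> p ^ Max ?S" "p ^ Max ?S \<le> X"
      using p2 by (auto intro: power_increasing)
    then show ?thesis by linarith
  qed
  then have "real p ^ card ?S \<le> real X" by (metis of_nat_le_iff of_nat_power)
  then have "ln (real p ^ card ?S) \<le> ln (real X)" using p2 assms by (subst ln_le_cancel_iff) auto
  then show ?thesis using p2 by (simp add: ln_realpow)
qed

lemma psi_le:
  assumes "1 \<le> X"
  shows "psi X \<le> real (card {p. prime p \<and> p \<le> X}) * ln (real X)"
proof -
  let ?D = "{d\<in>{1..X}. primepow d}"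
  let ?T = "{p. prime p \<and> p \<le> X}"
  have finT: "finite ?T" by (rule finite_subset[of _ "{..X}"]) auto
  have "psi X = (\<Sum>d\<in>?D. ln (real (aprimedivisor d)))"
    unfolding psi_def mangoldt_real by (subst sum.inter_filter) auto
  also have "\<dots> = (\<Sum>p\<in>?T. \<Sum>d\<in>{d. d \<in> ?D \<and> aprimedivisor d = p}. ln (real (aprimedivisor d)))"
  proof (rule sum.group[symmetric])
    show "aprimedivisor ` ?D \<subseteq> ?T"
    proof clarify
      fix d assume d: "d \<in> {1..X}" "primepow d"
      then have "d > Suc 0" using primepow_gt_Suc_0 by blast
      then show "prime (aprimedivisor d) \<and> aprimedivisor d \<le> X"
        using d aprimedivisor_nat[of d] aprimedivisor_le_nat[of d] by auto
    qed
  qed (auto simp: finT)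
  also have "\<dots> \<le> (\<Sum>p\<in>?T. ln (real X))"
  proof (rule sum_mono)
    fix p assume p: "p \<in> ?T"
    let ?Dp = "{d. d \<in> ?D \<and> aprimedivisor d = p}"
    let ?S = "{k. 0 < k \<and> p^k \<le> X}"
    have "?Dp \<subseteq> (\<lambda>k. p^k) ` ?S"
    proof
      fix d assume d: "d \<in> ?Dp"
      then have pp: "primepow d" and dX: "d \<le> X" and ap: "aprimedivisor d = p" by auto
      have dec: "p ^ multiplicity p d = d" using primepow_decompose[OF pp] ap by simp
      have "d > Suc 0" using pp primepow_gt_Suc_0 by blast
      have "multiplicity p d > 0"
      proof (rule ccontr)
        assume "\<not> 0 < multiplicity p d"
        then have "d = 1" using dec by simp
        with \<open>d > Suc 0\<close> show False by simp
      qed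
      then show "d \<in> (\<lambda>k. p^k) ` ?S" using dec dX by (intro image_eqI[of _ _ "multiplicity p d"]) auto
    qed
    moreover have "finite ?S"
    proof (rule finite_subset[of _ "{..X}"])
      show "?S \<subseteq> {..X}"
      proof
        fix k assume "k \<in> ?S"
        moreover have "p \<ge> 2" using p prime_ge_2_nat by blast
        ultimately have "k < p^k" "p^k \<le> X" by (auto intro: less_le_trans[OF less_exp] power_increasing)
        then show "k \<in> {..X}" by simp
      qed
    qed simp
    ultimately have cd: "card ?Dp \<le> card ?S"
      by (meson card_image_le finite_imageI card_mono le_trans)
    have "(\<Sum>d\<in>?Dp. ln (real (aprimedivisor d))) = real (card ?Dp) * ln (real p)" by simp
    also have "\<dots> \<le> real (card ?S) * ln (real p)"
      using cd p prime_ge_2_nat[of p] by (intro mult_right_mono) auto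
    also have "\<dots> \<le> ln (real X)" using card_exp_bound[of p X] p assms by auto
    finally show "(\<Sum>d\<in>?Dp. ln (real (aprimedivisor d))) \<le> ln (real X)" .
  qed
  also have "\<dots> = real (card ?T) * ln (real X)" by simp
  finally show ?thesis .
qed



definition smooth :: "nat set \<Rightarrow> nat \<Rightarrow> nat set" where
  "smooth A M = {n\<in>{1..M}. \<forall>q. prime q \<and> q dvd n \<longrightarrow> q \<in> A}"

lemma geom_le:
  assumes "q \<ge> (2::nat)"
  shows "(\<Sum>k\<in>{..M}. (1 / real q)^k) \<le> real q / (real q - 1)"
proof -
  have "(1 - 1/real q) * (\<Sum>k<Suc M. (1/real q)^k) = 1 - (1/real q)^Suc M"
    by (rule one_diff_power_eq[symmetric])
  also have "\<dots> \<le> 1" by simp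
  finally have h: "(1 - 1/real q) * (\<Sum>k\<in>{..M}. (1/real q)^k) \<le> 1"
    by (simp add: lessThan_Suc_atMost)
  have pos: "1 - 1/real q > 0" using assms by (simp add: field_simps)
  have "(\<Sum>k\<in>{..M}. (1/real q)^k) \<le> 1 / (1 - 1/real q)"
    using h pos by (simp add: field_simps mult.commute)
  also have "1 / (1 - 1/real q) = real q / (real q - 1)"
    using assms by (simp add: field_simps)
  finally show ?thesis .
qed

lemma smooth_sum_le:
  assumes "finite A" "\<forall>p\<in>A. prime p"
  shows "(\<Sum>n\<in>smooth A M. 1 / real n) \<le> (\<Prod>p\<in>A. real p / (real p - 1))"
  using assms
proof (induction A rule: finite_induct)
  case empty
  have "smooth {} M \<subseteq> {1}"
  proof
    fix n assume n: "n \<in> smooth {} M"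
    then have "n \<ge> 1" by (auto simp: smooth_def)
    show "n \<in> {1}"
    proof (rule ccontr)
      assume "n \<notin> {1}"
      then have "n \<noteq> 1" by simp
      then obtain q where "prime q" "q dvd n" using prime_factor_nat[of n] by blast
      with n show False by (auto simp: smooth_def)
    qed
  qed
  then have "(\<Sum>n\<in>smooth {} M. 1 / real n) \<le> (\<Sum>n\<in>{1}. 1 / real n)"
    by (intro sum_mono2) auto
  then show ?case by simp
next
  case (insert q A)
  have q: "prime q" using insert by simp
  have q2: "q \<ge> 2" using q prime_ge_2_nat by blast
  let ?g = "\<lambda>(k,m). q^k * m"
  have sub: "smooth (insert q A) M \<subseteq> ?g ` ({..M} \<times> smooth A M)"
  proof
    fix n assume n: "n \<in> smooth (insert q A) M"
    then have n1: "n \<ge> 1" "n \<le> M" and nf: "\<forall>s. prime s \<and> s dvd n \<longrightarrow> s \<in> insert q A"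
      by (auto simp: smooth_def)
    define k where "k = multiplicity q n"
    define m where "m = n div q^k"
    have dv: "q^k dvd n" unfolding k_def by (rule multiplicity_dvd)
    have nm: "n = q^k * m" using dv unfolding m_def by simp
    have ndq: "\<not> q dvd m" unfolding m_def k_def
      using multiplicity_decompose[of n q] q2 n1 by simp
    have m1: "m \<ge> 1"
    proof (rule ccontr)
      assume "\<not> m \<ge> 1" then have "m = 0" by simp
      then show False using nm n1 by simp
    qed
    have mle: "m \<le> n" using nm q2 by (metis dvd_imp_le dvd_triv_right n1(1) less_le_trans zero_less_one)
    have "k < q^k" using q2 by (intro less_exp[THEN less_le_trans]) (auto intro: power_mono)
    moreover have "q^k \<le> n" using dv n1 by (intro dvd_imp_le) auto
    ultimately have kM: "k \<le> M" using n1 by linarith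
    have "m \<in> smooth A M"
      unfolding smooth_def
    proof (intro CollectI conjI allI impI)
      show "m \<in> {1..M}" using m1 mle n1 by auto
    next
      fix s assume s: "prime s \<and> s dvd m"
      then have "s dvd n" using nm by simp
      then have "s \<in> insert q A" using nf s by blast
      moreover have "s \<noteq> q" using s ndq by blast
      ultimately show "s \<in> A" by simp
    qed
    then show "n \<in> ?g ` ({..M} \<times> smooth A M)" using kM nm by (intro image_eqI[of _ _ "(k,m)"]) auto
  qed
  have finS: "finite (smooth A M)" unfolding smooth_def by simp
  have "(\<Sum>n\<in>smooth (insert q A) M. 1 / real n) \<le> (\<Sum>n\<in>?g ` ({..M} \<times> smooth A M). 1 / real n)"
    by (intro sum_mono2 sub finite_imageI) (auto simp: finS)
  also have "\<dots> \<le> (\<Sum>x\<in>{..M} \<times> smooth A M. ((\<lambda>n. 1 / real n) \<circ> ?g) x)"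
    by (rule sum_image_le) (auto simp: finS)
  also have "\<dots> = (\<Sum>(k,m)\<in>{..M} \<times> smooth A M. (1/real q)^k * (1 / real m))"
    by (intro sum.cong refl) (auto simp: power_one_over)
  also have "\<dots> = (\<Sum>k\<in>{..M}. \<Sum>m\<in>smooth A M. (1/real q)^k * (1 / real m))"
    by (rule sum.cartesian_product[symmetric])
  also have "\<dots> = (\<Sum>k\<in>{..M}. (1/real q)^k) * (\<Sum>m\<in>smooth A M. 1 / real m)"
    by (rule sum_product[symmetric])
  also have "\<dots> \<le> (real q / (real q - 1)) * (\<Prod>p\<in>A. real p / (real p - 1))"
  proof (rule mult_mono)
    show "(\<Sum>k\<in>{..M}. (1/real q)^k) \<le> real q / (real q - 1)" using geom_le q2 by blast
    show "(\<Sum>m\<in>smooth A M. 1 / real m) \<le> (\<Prod>p\<in>A. real p / (real p - 1))"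
      using insert by simp
    show "0 \<le> real q / (real q - 1)" using q2 by simp
    show "0 \<le> (\<Sum>m\<in>smooth A M. 1 / real m)" by (rule sum_nonneg) simp
  qed
  also have "\<dots> = (\<Prod>p\<in>insert q A. real p / (real p - 1))"
    using insert by simp
  finally show ?case .
qed

lemma mertens_weak:
  fixes z :: nat
  assumes "z \<ge> 1"
  shows "(\<Prod>p\<in>{p. prime p \<and> p \<le> z}. (real p - 1) / real p) \<le> 1 / ln (real z + 1)"
proof (cases "z = 0")
  case True
  then show ?thesis using assms by simp
next
  case False
  let ?A = "{p. prime p \<and> p \<le> z}"
  have finA: "finite ?A" by (rule finite_subset[of _ "{..z}"]) auto
  have "smooth ?A z = {1..z}"
    unfolding smooth_def by (auto dest: dvd_imp_le)
  then have "harm z \<le> (\<Prod>p\<in>?A. real p / (real p - 1))"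
    using smooth_sum_le[OF finA, of z] unfolding harm_def by (simp add: divide_inverse)
  moreover have "ln (real z + 1) \<le> harm z" by (rule ln_le_harm)
  moreover have "ln (real z + 1) > 0" using False by simp
  ultimately have le: "ln (real z + 1) \<le> (\<Prod>p\<in>?A. real p / (real p - 1))" by linarith
  have pos: "(\<Prod>p\<in>?A. (real p - 1) / real p) > 0"
    by (rule prod_pos) (auto dest: prime_ge_2_nat)
  have inv: "(\<Prod>p\<in>?A. real p / (real p - 1)) = 1 / (\<Prod>p\<in>?A. (real p - 1) / real p)"
  proof -
    have "(\<Prod>p\<in>?A. real p / (real p - 1)) = (\<Prod>p\<in>?A. 1 / ((real p - 1) / real p))"
      by (intro prod.cong) auto
    also have "\<dots> = 1 / (\<Prod>p\<in>?A. (real p - 1) / real p)"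
      by (simp add: prod_dividef)
    finally show ?thesis .
  qed
  show ?thesis using le pos \<open>ln (real z + 1) > 0\<close> unfolding inv
    by (simp add: field_simps)
qed



lemma card_filter_sum: "finite P \<Longrightarrow> card {u\<in>P. Q u} = (\<Sum>u\<in>P. if Q u then 1 else (0::nat))"
  by (subst card_eq_sum) (rule sum.inter_filter)

lemma averaging:
  fixes A :: "nat set" and P :: "'u set" and c :: "'u \<Rightarrow> nat \<Rightarrow> nat"
  assumes finA: "finite A" and finP: "finite P" and pos: "\<forall>p\<in>A. p > 0"
      and cl: "\<forall>u\<in>P. \<forall>p\<in>A. c u p < p"
  shows "\<exists>r \<in> PiE A (\<lambda>p. {..<p}).
           real (card {u\<in>P. \<forall>p\<in>A. r p \<noteq> c u p}) \<le> real (card P) * (\<Prod>p\<in>A. (real p - 1) / real p)"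
proof (rule ccontr)
  let ?R = "PiE A (\<lambda>p. {..<p})"
  let ?Q = "\<lambda>r u. \<forall>p\<in>A. r p \<noteq> c u p"
  assume H: "\<not> ?thesis"
  have finR: "finite ?R" using finA by (intro finite_PiE) auto
  have cardR: "card ?R = (\<Prod>p\<in>A. p)" using finA by (simp add: card_PiE)
  have Rne: "?R \<noteq> {}"
  proof -
    have "restrict (\<lambda>_. 0) A \<in> ?R" using pos by auto
    then show ?thesis by blast
  qed
  have key: "card {r\<in>?R. ?Q r u} = (\<Prod>p\<in>A. p - 1)" if u: "u \<in> P" for u
  proof -
    have "{r\<in>?R. ?Q r u} = PiE A (\<lambda>p. {..<p} - {c u p})"
    proof (intro equalityI subsetI)
      fix r assume "r \<in> {r\<in>?R. ?Q r u}"
      then show "r \<in> PiE A (\<lambda>p. {..<p} - {c u p})" unfolding PiE_iff by auto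
    next
      fix r assume "r \<in> PiE A (\<lambda>p. {..<p} - {c u p})"
      then show "r \<in> {r\<in>?R. ?Q r u}" unfolding PiE_iff by auto
    qed
    then have "card {r\<in>?R. ?Q r u} = (\<Prod>p\<in>A. card ({..<p} - {c u p}))"
      using finA by (simp add: card_PiE)
    also have "\<dots> = (\<Prod>p\<in>A. p - 1)"
      using cl u by (intro prod.cong refl) auto
    finally show ?thesis .
  qed
  have "(\<Sum>r\<in>?R. card {u\<in>P. ?Q r u}) = (\<Sum>r\<in>?R. \<Sum>u\<in>P. if ?Q r u then 1 else (0::nat))"
    using finP by (intro sum.cong refl card_filter_sum)
  also have "\<dots> = (\<Sum>u\<in>P. \<Sum>r\<in>?R. if ?Q r u then 1 else (0::nat))" by (rule sum.swap)
  also have "\<dots> = (\<Sum>u\<in>P. card {r\<in>?R. ?Q r u})"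
    using finR by (intro sum.cong refl card_filter_sum[symmetric])
  also have "\<dots> = (\<Sum>u\<in>P. (\<Prod>p\<in>A. p - 1))" using key by (intro sum.cong refl) auto
  finally have S: "(\<Sum>r\<in>?R. card {u\<in>P. ?Q r u}) = card P * (\<Prod>p\<in>A. p - 1)" by simp
  have lt: "real (card P) * (\<Prod>p\<in>A. (real p - 1) / real p) < real (card {u\<in>P. ?Q r u})"
    if "r \<in> ?R" for r using H that by (auto simp: not_le)
  have "(\<Sum>r\<in>?R. real (card P) * (\<Prod>p\<in>A. (real p - 1) / real p)) < (\<Sum>r\<in>?R. real (card {u\<in>P. ?Q r u}))"
    using finR Rne lt by (intro sum_strict_mono) auto
  also have "\<dots> = real (\<Sum>r\<in>?R. card {u\<in>P. ?Q r u})" by (simp only: of_nat_sum)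
  also have "\<dots> = real (card P * (\<Prod>p\<in>A. p - 1))" by (simp only: S)
  finally have lt2: "real (card P) * (real (card ?R) * (\<Prod>p\<in>A. (real p - 1) / real p)) < real (card P) * real (\<Prod>p\<in>A. p - 1)"
    by (simp add: sum_constant mult_ac)
  moreover have "real (card ?R) * (\<Prod>p\<in>A. (real p - 1) / real p) = real (\<Prod>p\<in>A. p - 1)"
  proof -
    have "real (card ?R) * (\<Prod>p\<in>A. (real p - 1) / real p) = (\<Prod>p\<in>A. real p * ((real p - 1) / real p))"
      by (simp only: cardR of_nat_prod prod.distrib)
    also have "\<dots> = (\<Prod>p\<in>A. real (p - 1))"
      using pos by (intro prod.cong refl) (auto simp: of_nat_diff)
    finally show ?thesis by simp
  qed
  ultimately show False using lt2 by simp
qed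



lemma cong_cov:
  fixes b0 p :: nat and a :: int
  assumes "p > 0" "[b0 = nat (a mod int p)] (mod p)"
  shows "int p dvd (int b0 - a)"
proof -
  have "[int b0 = int (nat (a mod int p))] (mod int p)" using assms(2) by (simp only: cong_int_iff)
  moreover have "int (nat (a mod int p)) = a mod int p" using assms(1) by simp
  ultimately have "[int b0 = a mod int p] (mod int p)" by simp
  moreover have "[a mod int p = a] (mod int p)" by (simp add: cong_def)
  ultimately have "[int b0 = a] (mod int p)" by (rule cong_trans)
  then show ?thesis by (simp add: cong_iff_dvd_diff)
qed

lemma nat_le_ceil: "real p \<le> x \<Longrightarrow> p \<le> nat \<lceil>x\<rceil>"
proof -
  assume "real p \<le> x"
  then have "\<lceil>real p\<rceil> \<le> \<lceil>x\<rceil>" by (rule ceiling_mono)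
  then have "int p \<le> \<lceil>x\<rceil>" by simp
  then show ?thesis by linarith
qed

lemma cover:
  fixes x :: real and N y :: int and z :: nat
  assumes zx: "real z \<le> x" and z1: "z \<ge> 1" and y0: "y \<ge> 0"
  and cnt: "real (card ({0::nat,1} \<times> {-y..y})) / ln (real z + 1) \<le> real (card {p. prime p \<and> z < p \<and> real p \<le> x})"
  shows "\<exists>b::int. shift (sieved x) b \<inter> {-y..y} = {} \<and> shift (sieved x) (N - b) \<inter> {-y..y} = {}"
proof -
  define A where "A = {p. prime p \<and> p \<le> z}"
  define B where "B = {p. prime p \<and> z < p \<and> real p \<le> x}"
  define P where "P = {0::nat,1} \<times> {-y..y}"
  define c :: "nat \<times> int \<Rightarrow> nat \<Rightarrow> nat" where
    "c = (\<lambda>(i,m) p. nat ((if i = 0 then - m else N + m) mod int p))"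
  have finA: "finite A" unfolding A_def by (rule finite_subset[of _ "{..z}"]) auto
  have finB: "finite B" unfolding B_def
    by (rule finite_subset[of _ "{..nat \<lceil>x\<rceil>}"]) (auto intro: nat_le_ceil)
  have finP: "finite P" unfolding P_def by simp
  have posA: "\<forall>p\<in>A. p > 0" unfolding A_def by (auto dest: prime_gt_0_nat)
  have cl: "\<forall>u\<in>P. \<forall>p\<in>A. c u p < p"
  proof (intro ballI)
    fix u p assume "u \<in> P" "p \<in> A"
    then have "p > 0" using posA by auto
    obtain i m where u: "u = (i,m)" by (cases u)
    have "nat ((if i = 0 then - m else N + m) mod int p) < p"
      using \<open>p > 0\<close> by (simp add: nat_less_iff)
    then show "c u p < p" unfolding c_def u by simp
  qed
  obtain r where r: "r \<in> PiE A (\<lambda>p. {..<p})"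
    and rU: "real (card {u\<in>P. \<forall>p\<in>A. r p \<noteq> c u p}) \<le> real (card P) * (\<Prod>p\<in>A. (real p - 1) / real p)"
    using averaging[OF finA finP posA cl] by blast
  define U where "U = {u\<in>P. \<forall>p\<in>A. r p \<noteq> c u p}"
  have "real (card P) * (\<Prod>p\<in>A. (real p - 1) / real p) \<le> real (card P) * (1 / ln (real z + 1))"
    using mertens_weak[OF z1] unfolding A_def by (intro mult_left_mono) auto
  then have "real (card U) \<le> real (card B)" using rU cnt unfolding U_def B_def P_def by simp
  then have "card U \<le> card B" by simp
  moreover have finU: "finite U" unfolding U_def using finP by simp
  ultimately obtain f where fU: "f ` U \<subseteq> B" and finj: "inj_on f U"
    using card_le_inj[OF finU finB] by blast
  define Rf where "Rf = (\<lambda>p. if p \<in> A then r p else c (inv_into U f p) p)"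
  have "\<exists>b0. \<forall>p \<in> A \<union> f ` U. [b0 = Rf p] (mod id p)"
  proof (rule chinese_remainder_nat)
    show "finite (A \<union> f ` U)" using finA finU by simp
    show "\<forall>i\<in>A \<union> f ` U. \<forall>j\<in>A \<union> f ` U. i \<noteq> j \<longrightarrow> coprime (id i) (id j)"
    proof (intro ballI impI)
      fix i j assume "i \<in> A \<union> f ` U" "j \<in> A \<union> f ` U" "i \<noteq> j"
      moreover have "\<forall>q\<in>A \<union> f ` U. prime q" using fU unfolding A_def B_def by auto
      ultimately have "prime i" "prime j" "i \<noteq> j" by auto
      then show "coprime (id i) (id j)" using primes_coprime[of i j] by simp
    qed
  qed
  then obtain b0 where b0: "\<forall>p \<in> A \<union> f ` U. [b0 = Rf p] (mod p)" by auto
  have cov: "\<exists>p. prime p \<and> real p \<le> x \<and> [b0 = c u p] (mod p)" if u: "u \<in> P" for u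
  proof (cases "u \<in> U")
    case True
    let ?p = "f u"
    have pB: "?p \<in> B" using fU True by auto
    then have "?p \<notin> A" unfolding A_def B_def by auto
    moreover have "inv_into U f ?p = u" using finj True by simp
    ultimately have "Rf ?p = c u ?p" unfolding Rf_def by simp
    moreover have "[b0 = Rf ?p] (mod ?p)" using b0 True by auto
    ultimately show ?thesis using pB unfolding B_def by auto
  next
    case False
    then obtain p where p: "p \<in> A" "r p = c u p" using u unfolding U_def by auto
    have "[b0 = Rf p] (mod p)" using b0 p by auto
    then have "[b0 = c u p] (mod p)" using p unfolding Rf_def by simp
    moreover have "prime p" "real p \<le> x" using p zx unfolding A_def by auto
    ultimately show ?thesis by auto
  qed
  have dv: "\<exists>p. prime p \<and> real p \<le> x \<and> int p dvd (if i = 0 then m + int b0 else m + (N - int b0))"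
    if "i \<in> {0,1}" "m \<in> {-y..y}" for i :: nat and m :: int
  proof -
    have "(i,m) \<in> P" using that unfolding P_def by auto
    then obtain p where p: "prime p" "real p \<le> x" "[b0 = c (i,m) p] (mod p)" using cov by blast
    then have "int p dvd (int b0 - (if i = 0 then - m else N + m))"
      by (intro cong_cov) (auto simp: c_def prime_gt_0_nat)
    then have "int p dvd (if i = 0 then m + int b0 else m + (N - int b0))"
    proof (cases "i = 0")
      case True
      with \<open>int p dvd _\<close> show ?thesis by (simp add: add.commute)
    next
      case False
      with \<open>int p dvd _\<close> have "int p dvd (int b0 - (N + m))" by simp
      then have "int p dvd - (int b0 - (N + m))" by (simp only: dvd_minus_iff)
      then show ?thesis using False by (simp add: algebra_simps)
    qed
    then show ?thesis using p by blast
  qed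
  have "shift (sieved x) (int b0) \<inter> {-y..y} = {} \<and> shift (sieved x) (N - int b0) \<inter> {-y..y} = {}"
  proof (intro conjI)
    show "shift (sieved x) (int b0) \<inter> {-y..y} = {}"
    proof (rule ccontr)
      assume "shift (sieved x) (int b0) \<inter> {-y..y} \<noteq> {}"
      then obtain m where m: "m \<in> {-y..y}" "m + int b0 \<in> sieved x"
        unfolding shift_def by force
      obtain p where "prime p" "real p \<le> x" "int p dvd (m + int b0)" using dv[of 0 m] m by auto
      then show False using m unfolding sieved_def by auto
    qed
    show "shift (sieved x) (N - int b0) \<inter> {-y..y} = {}"
    proof (rule ccontr)
      assume "shift (sieved x) (N - int b0) \<inter> {-y..y} \<noteq> {}"
      then obtain m where m: "m \<in> {-y..y}" "m + (N - int b0) \<in> sieved x"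
        unfolding shift_def by force
      obtain p where "prime p" "real p \<le> x" "int p dvd (m + (N - int b0))" using dv[of 1 m] m by auto
      then show False using m unfolding sieved_def by auto
    qed
  qed
  then show ?thesis by blast
qed



lemma ln4_ge1: "ln (4::real) \<ge> 1"
proof -
  have "1 = ln (exp (1::real))" by simp
  also have "\<dots> \<le> ln 4" using exp_le by (subst ln_le_cancel_iff) auto
  finally show ?thesis .
qed

lemma psi_mono: "m \<le> n \<Longrightarrow> psi m \<le> psi n"
  unfolding psi_def by (rule sum_mono2) (auto simp: mangoldt_nonneg)

lemma prime_count_lower:
  assumes X2: "X \<ge> 2"
  shows "(real (X div 2) * ln 4 - ln (real X)) / ln (real X) \<le> real (card {p. prime p \<and> p \<le> X})"
proof -
  define n where "n = X div 2"
  have n0: "n > 0" using X2 unfolding n_def by simp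
  have nX: "2 * n \<le> X" unfolding n_def by simp
  have lnX: "ln (real X) > 0" using X2 by simp
  have "4^n / (2 * real n) \<le> real ((2*n) choose n)" by (rule central_binomial_lower_bound[OF n0])
  then have "ln (4^n / (2 * real n)) \<le> ln (real ((2*n) choose n))"
    using n0 by (subst ln_le_cancel_iff) auto
  also have "\<dots> \<le> psi (2*n)" by (rule ln_binom_le_psi)
  also have "\<dots> \<le> psi X" using nX by (rule psi_mono)
  also have "\<dots> \<le> real (card {p. prime p \<and> p \<le> X}) * ln (real X)" using X2 by (intro psi_le) simp
  finally have h: "ln (4^n / (2 * real n)) \<le> real (card {p. prime p \<and> p \<le> X}) * ln (real X)" .
  have "ln (4^n / (2 * real n)) = real n * ln 4 - ln (2 * real n)"
    using n0 by (simp add: ln_div ln_realpow)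
  moreover have "ln (2 * real n) \<le> ln (real X)" using n0 nX by (subst ln_le_cancel_iff) auto
  ultimately have "real n * ln 4 - ln (real X) \<le> real (card {p. prime p \<and> p \<le> X}) * ln (real X)"
    using h by linarith
  then show ?thesis using lnX unfolding n_def by (simp add: divide_le_eq)
qed

theorem mainTheorem3:
  shows "\<exists>x0::real. \<forall>x\<ge>x0. \<forall>N::int.
    \<exists>b::int.
      shift (sieved x) b \<inter> {-\<lfloor>0.08 * x\<rfloor>..\<lfloor>0.08 * x\<rfloor>} = {} \<and>
      shift (sieved x) (N - b) \<inter> {-\<lfloor>0.08 * x\<rfloor>..\<lfloor>0.08 * x\<rfloor>} = {}"
proof -
  have ev: "eventually (\<lambda>x::real. (0.32*x+2)/(0.9 * ln x) + x powr 0.9 \<le> ((x/2-1) - ln x)/ln x) at_top"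
    by real_asymp
  then obtain x1 :: real where x1: "\<And>x. x \<ge> x1 \<Longrightarrow> (0.32*x+2)/(0.9 * ln x) + x powr 0.9 \<le> ((x/2-1) - ln x)/ln x"
    unfolding eventually_at_top_linorder by blast
  show ?thesis
  proof (intro exI[of _ "max x1 16"] allI impI)
    fix x :: real and N :: int
    assume xx: "max x1 16 \<le> x"
    then have x16: "x \<ge> 16" and xx1: "x \<ge> x1" by auto
    define y where "y = \<lfloor>0.08 * x\<rfloor>"
    define z where "z = nat \<lfloor>x powr 0.9\<rfloor>"
    define X where "X = nat \<lfloor>x\<rfloor>"
    have lnx: "ln x > 0" using x16 by simp
    have pw1: "x powr 0.9 \<ge> 1" using x16 by (intro ge_one_powr_ge_zero) auto
    have pwx: "x powr 0.9 \<le> x"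
    proof -
      have "x powr 0.9 \<le> x powr 1" using x16 by (intro powr_mono) auto
      then show ?thesis using x16 by simp
    qed
    have zle: "real z \<le> x powr 0.9" unfolding z_def using pw1 by simp
    have z1: "z \<ge> 1" unfolding z_def using pw1 by (simp add: le_nat_iff)
    have zge: "real z + 1 \<ge> x powr 0.9" unfolding z_def using pw1
      by (simp add: of_nat_nat)
    have y0: "y \<ge> 0" unfolding y_def using x16 by simp
    have yle: "real_of_int y \<le> 0.08 * x" unfolding y_def by (rule of_int_floor_le)
    have "ln (x powr 0.9) = 0.9 * ln x" using x16 by (simp add: ln_powr)
    moreover have "ln (x powr 0.9) \<le> ln (real z + 1)" using pw1 zge by (subst ln_le_cancel_iff) auto
    ultimately have lnz: "0.9 * ln x \<le> ln (real z + 1)" by simp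
    have cP: "real (card ({0::nat,1} \<times> {-y..y})) = 4 * real_of_int y + 2"
      using y0 by (simp add: card_cartesian_product)
    have step1: "real (card ({0::nat,1} \<times> {-y..y})) / ln (real z + 1) \<le> (0.32*x+2)/(0.9 * ln x)"
      unfolding cP using yle y0 lnx lnz by (intro frac_le) auto
    have X2: "X \<ge> 2" unfolding X_def using x16 by (simp add: le_nat_iff)
    have Xx: "real X \<le> x" and Xx1: "real X \<ge> x - 1" unfolding X_def using x16 by (simp_all add: of_nat_nat)
    have lnXx: "ln (real X) \<le> ln x" using Xx X2 by (subst ln_le_cancel_iff) auto
    have lnX: "ln (real X) > 0" using X2 by simp
    define n where "n = X div 2"
    have nge: "real n \<ge> x/2 - 1" unfolding n_def using Xx1 by linarith
    have "((x/2-1) - ln x)/ln x = (x/2-1)/ln x - 1" using lnx by (simp add: field_simps)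
    also have "\<dots> \<le> real n * ln 4 / ln x - 1"
    proof -
      have "real n * 1 \<le> real n * ln 4" using ln4_ge1 by (intro mult_left_mono) auto
      then have "x/2 - 1 \<le> real n * ln 4" using nge by linarith
      then show ?thesis using lnx by (intro diff_right_mono divide_right_mono) auto
    qed
    also have "\<dots> \<le> real n * ln 4 / ln (real X) - 1"
      using lnXx lnX ln4_ge1 by (intro diff_right_mono divide_left_mono) auto
    also have "\<dots> = (real n * ln 4 - ln (real X)) / ln (real X)" using lnX by (simp add: field_simps)
    also have "\<dots> \<le> real (card {p. prime p \<and> p \<le> X})" unfolding n_def by (rule prime_count_lower[OF X2])
    finally have step2: "((x/2-1) - ln x)/ln x \<le> real (card {p. prime p \<and> p \<le> X})" .
    have "{p. prime p \<and> p \<le> X} \<subseteq> {p. prime p \<and> z < p \<and> real p \<le> x} \<union> {p. prime p \<and> p \<le> z}"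
      using Xx by (auto simp: not_less)
    then have "card {p. prime p \<and> p \<le> X} \<le> card ({p. prime p \<and> z < p \<and> real p \<le> x} \<union> {p. prime p \<and> p \<le> z})"
      by (intro card_mono) (auto intro: finite_subset[of _ "{..nat \<lceil>x\<rceil>}"] nat_le_ceil)
    also have "\<dots> \<le> card {p. prime p \<and> z < p \<and> real p \<le> x} + card {p. prime p \<and> p \<le> z}"
      by (rule card_Un_le)
    also have "card {p. prime p \<and> p \<le> z} \<le> z"
    proof -
      have "{p. prime p \<and> p \<le> z} \<subseteq> {1..z}" by (auto dest: prime_gt_0_nat)
      then have "card {p. prime p \<and> p \<le> z} \<le> card {1..z}" by (intro card_mono) auto
      then show ?thesis by simp
    qed
    finally have step3: "real (card {p. prime p \<and> p \<le> X}) \<le> real (card {p. prime p \<and> z < p \<and> real p \<le> x}) + real z"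
      by linarith
    have cnt: "real (card ({0::nat,1} \<times> {-y..y})) / ln (real z + 1) \<le> real (card {p. prime p \<and> z < p \<and> real p \<le> x})"
      using step1 step2 step3 x1[OF xx1] zle by linarith
    show "\<exists>b::int.
      shift (sieved x) b \<inter> {-\<lfloor>0.08 * x\<rfloor>..\<lfloor>0.08 * x\<rfloor>} = {} \<and>
      shift (sieved x) (N - b) \<inter> {-\<lfloor>0.08 * x\<rfloor>..\<lfloor>0.08 * x\<rfloor>} = {}"
    proof -
      have "real z \<le> x" using zle pwx by linarith
      from cover[OF this z1 y0 cnt, of N] show ?thesis unfolding y_def .
    qed
  qed
qed

end
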